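(* Let $p$ be a prime. Every $p^\alpha$-periodic map $\mathbb{Z}\to\mathbb{Z}_{p^\beta}$ ($\alpha,\beta\ge1$) is described by a $\mathbb{Z}_{p^\beta}$-polyfract, i.e. $\mathbb{Z}_{p^\beta}\binom{X}{\mathbb{Z}_{p^\alpha}}=\mathbb{Z}_{p^\beta}^{\mathbb{Z}_{p^\alpha}}$. More generally, if $q_1,\dots,q_n\ge p$ are powers of $p$ and $B$ is a finite commutative $p$-group, then every map $\mathbb{Z}_{q_1}\times\cdots\times\mathbb{Z}_{q_n}\to B$ is polyfractal: $$B\binom{X_1,\dots,X_n}{\mathbb{Z}_{q_1}\times\cdots\times\mathbb{Z}_{q_n}}=B^{\mathbb{Z}_{q_1}\times\cdots\times\mathbb{Z}_{q_n}}.$$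
   Context: $\mathbb{Z}_r=\mathbb{Z}/r\mathbb{Z}$; $\binom{X}{\delta}=X(X-1)\cdots(X-\delta+1)/\delta!$, $\binom{X}{0}=1$. For a finitely generated commutative group $B$, a $B$-polyfract in $X_1,\dots,X_n$ is a formal finite sum $P=\sum_{\delta\in\mathbb{N}^n}P_\delta\prod_j\binom{X_j}{\delta_j}$ with $P_\delta\in B$, evaluated at $x\in\mathbb{Z}^n$ by $P(x)=\sum_\delta(\prod_j\binom{x_j}{\delta_j})P_\delta$. Polyfracts are identified with their evaluation maps (which is injective). $B\binom{X_1,\dots,X_n}{\mathbb{Z}_{q_1}\times\cdots\times\mathbb{Z}_{q_n}}$ is the set of $B$-polyfracts whose map on $\mathbb{Z}^n$ is $q_j$-periodic in the $j$-th variable, viewed as maps on $\mathbb{Z}_{q_1}\times\cdots\times\mathbb{Z}_{q_n}$. *)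

theory Defs
  imports Main "HOL-Computational_Algebra.Primes"
begin

definition zsmult :: "int \<Rightarrow> 'b::ab_group_add \<Rightarrow> 'b" where
  "zsmult k b = (if 0 \<le> k then (\<Sum>i<nat k. b) else - (\<Sum>i<nat (- k). b))"

text \<open>Binomial polynomial binom(x, k) = x(x-1)...(x-k+1)/k! on integers (exact division).\<close>
definition ibinom :: "int \<Rightarrow> nat \<Rightarrow> int" where
  "ibinom x k = (\<Prod>i<k. x - int i) div fact k"

definition is_polyfract :: "nat \<Rightarrow> ((nat \<Rightarrow> nat) \<Rightarrow> 'b::ab_group_add) \<Rightarrow> bool" where
  "is_polyfract n P \<longleftrightarrow> finite {\<delta>. P \<delta> \<noteq> 0} \<and> (\<forall>\<delta>. P \<delta> \<noteq> 0 \<longrightarrow> (\<forall>j\<ge>n. \<delta> j = 0))"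

definition polyfract_eval :: "nat \<Rightarrow> ((nat \<Rightarrow> nat) \<Rightarrow> 'b::ab_group_add) \<Rightarrow> (nat \<Rightarrow> int) \<Rightarrow> 'b" where
  "polyfract_eval n P x = (\<Sum>\<delta>\<in>{\<delta>. P \<delta> \<noteq> 0}. zsmult (\<Prod>j<n. ibinom (x j) (\<delta> j)) (P \<delta>))"

end

theory Submission imports Defs Complex_Main "HOL-Library.Function_Algebras" begin

lemma ibinom_Suc_Suc: "ibinom (x+1) (Suc k) = ibinom x k + ibinom x (Suc k)"
  using gbinomial_int_Suc_Suc[of x k] by (simp add: ibinom_def gbinomial_prod_rev atLeast0LessThan)
lemma ibinom_0[simp]: "ibinom x 0 = 1" by (simp add: ibinom_def)
lemma ibinom_nat: "ibinom (int m) k = int (m choose k)"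
  using int_binomial[of m k] by (simp add: ibinom_def gbinomial_prod_rev atLeast0LessThan)

definition nsm :: "nat \<Rightarrow> 'b::ab_group_add \<Rightarrow> 'b" where
  "nsm m b = (\<Sum>i<m. b)"

lemma nsm_0[simp]: "nsm 0 b = 0" by (simp add: nsm_def)
lemma nsm_Suc: "nsm (Suc m) b = nsm m b + b" by (simp add: nsm_def)
lemma nsm_add: "nsm (m + n) b = nsm m b + nsm n b"
  by (induction n) (simp_all add: nsm_Suc algebra_simps)
lemma nsm_mult: "nsm (m * n) b = nsm m (nsm n b)"
  by (induction m) (simp_all add: nsm_Suc nsm_add algebra_simps)
lemma nsm_plus: "nsm m (a + b) = nsm m a + nsm m b"
  by (induction m) (simp_all add: nsm_Suc algebra_simps)
lemma nsm_minus: "nsm m (a - b) = nsm m a - nsm m b"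
  by (induction m) (simp_all add: nsm_Suc algebra_simps)
lemma nsm_zero[simp]: "nsm m 0 = 0"
  by (induction m) (simp_all add: nsm_Suc)
lemma nsm_apply: "nsm m h x = nsm m (h x)"
  by (induction m) (simp_all add: nsm_Suc)

lemma zsmult_nsm: "zsmult k b = nsm (nat k) b - nsm (nat (-k)) b"
  by (simp add: zsmult_def nsm_def)

lemma zsmult_diff_nat: "zsmult (int a - int b) g = nsm a g - nsm b g"
proof (cases "b \<le> a")
  case True
  then obtain c where "a = b + c" using le_Suc_ex by blast
  then show ?thesis by (simp add: zsmult_nsm nsm_add)
next
  case False
  then obtain c where "b = a + c" by (metis le_Suc_ex nat_le_linear)
  then show ?thesis by (simp add: zsmult_nsm nsm_add)
qed

lemma zsmult_add_left: "zsmult (k + l) g = zsmult k g + zsmult l g"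
proof -
  obtain a b where k: "k = int a - int b" using int_diff_cases by blast
  obtain c d where l: "l = int c - int d" using int_diff_cases by blast
  have "k + l = int (a + c) - int (b + d)" using k l by simp
  then show ?thesis unfolding k l by (simp only: zsmult_diff_nat nsm_add) (simp add: algebra_simps)
qed

lemma zsmult_mult: "zsmult (k * l) g = zsmult k (zsmult l g)"
proof -
  obtain a b where k: "k = int a - int b" using int_diff_cases by blast
  obtain c d where l: "l = int c - int d" using int_diff_cases by blast
  have "k * l = int (a * c + b * d) - int (a * d + b * c)" unfolding k l by (simp add: algebra_simps)
  then show ?thesis unfolding k l by (simp only: zsmult_diff_nat nsm_add nsm_mult nsm_minus) (simp add: algebra_simps)
qed

lemma zsmult_swap: "zsmult a (zsmult b v) = zsmult b (zsmult a v)"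
  by (metis zsmult_mult mult.commute)

lemma zsmult_plus: "zsmult k (a + b) = zsmult k a + zsmult k b"
  by (simp add: zsmult_nsm nsm_plus algebra_simps)
lemma zsmult_minus: "zsmult k (a - b) = zsmult k a - zsmult k b"
  by (simp add: zsmult_nsm nsm_minus algebra_simps)
lemma zsmult_zero[simp]: "zsmult k 0 = 0"
  by (simp add: zsmult_nsm)
lemma zsmult_0[simp]: "zsmult 0 g = 0"
  by (simp add: zsmult_nsm)
lemma zsmult_1[simp]: "zsmult 1 g = g"
  by (simp add: zsmult_nsm nsm_def)
lemma zsmult_uminus: "zsmult k (- a) = - zsmult k a"
  using zsmult_minus[of k 0 a] by simp
lemma zsmult_apply: "zsmult k h x = zsmult k (h x)"
  by (simp add: zsmult_nsm nsm_apply)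
lemma zsmult_sum: "zsmult k (\<Sum>i\<in>A. f i) = (\<Sum>i\<in>A. zsmult k (f i))"
  by (induction A rule: infinite_finite_induct) (simp_all add: zsmult_plus)
lemma zsmult_sum_left: "zsmult (\<Sum>i\<in>A. f i) g = (\<Sum>i\<in>A. zsmult (f i) g)"
  by (induction A rule: infinite_finite_induct) (simp_all add: zsmult_add_left)
lemma zsmult_int: "zsmult k (b::int) = k * b"
proof -
  have "nsm m b = int m * b" for m by (induction m) (simp_all add: nsm_Suc algebra_simps)
  then show ?thesis by (simp add: zsmult_nsm algebra_simps)
qed

lemma prime_dvd_choose_pow:
  assumes "prime (p::nat)" "0 < i" "i < p ^ e"
  shows "p dvd (p ^ e choose i)"
proof (rule ccontr)
  assume nd: "\<not> p dvd (p ^ e choose i)"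
  obtain m where m: "p ^ e = Suc m" using assms by (cases "p^e") auto
  obtain j where j: "i = Suc j" using assms by (cases i) auto
  have "Suc m * (m choose j) = (Suc m choose Suc j) * Suc j" by (rule Suc_times_binomial_eq)
  hence "p ^ e dvd (p ^ e choose i) * i" using m j by (metis dvd_triv_left)
  moreover have "coprime (p ^ e) (p ^ e choose i)"
    using nd assms(1) by (simp add: prime_imp_coprime coprime_commute)
  ultimately have "p ^ e dvd i" by (simp add: coprime_dvd_mult_right_iff)
  then show False using assms by (meson dvd_imp_le not_le)
qed

fun fdiff :: "nat \<Rightarrow> (int \<Rightarrow> 'b::ab_group_add) \<Rightarrow> int \<Rightarrow> 'b" where
  "fdiff 0 g = g"
| "fdiff (Suc k) g = fdiff k (\<lambda>x. g (x + 1) - g x)"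

definition newt :: "nat \<Rightarrow> (int \<Rightarrow> 'b::ab_group_add) \<Rightarrow> int \<Rightarrow> 'b" where
  "newt N g x = (\<Sum>\<delta><N. zsmult (ibinom x \<delta>) (fdiff \<delta> g 0))"

lemma fdiff_Suc': "fdiff (Suc k) g x = fdiff k g (x + 1) - fdiff k g x"
proof (induction k arbitrary: g x)
  case 0 then show ?case by simp
next
  case (Suc k)
  have "fdiff (Suc (Suc k)) g x = fdiff (Suc k) (\<lambda>x. g (x + 1) - g x) x" by simp
  also have "\<dots> = fdiff k (\<lambda>x. g (x + 1) - g x) (x + 1) - fdiff k (\<lambda>x. g (x + 1) - g x) x" by (rule Suc.IH)
  also have "\<dots> = fdiff (Suc k) g (x + 1) - fdiff (Suc k) g x" by simp
  finally show ?case .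
qed

lemma fdiff_Suc'': "fdiff (Suc k) g = (\<lambda>x. fdiff k g (x + 1) - fdiff k g x)"
  using fdiff_Suc' by blast

lemma fdiff_add: "fdiff (k + i) g = fdiff k (fdiff i g)"
  by (induction k) (simp_all only: add_Suc fdiff_Suc'', simp)

lemma fdiff_minus: "fdiff k (\<lambda>x. a x - b x) y = fdiff k a y - fdiff k b y"
  by (induction k arbitrary: y) (simp_all del: fdiff.simps(2) add: fdiff_Suc' algebra_simps)

lemma fdiff_zsmult: "fdiff k (\<lambda>x. zsmult c (a x)) y = zsmult c (fdiff k a y)"
  by (induction k arbitrary: y) (simp_all del: fdiff.simps(2) add: fdiff_Suc' zsmult_minus)

lemma fdiff_sum: "fdiff k (\<lambda>x. \<Sum>i\<in>A. h i x) y = (\<Sum>i\<in>A. fdiff k (h i) y)"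
  by (induction k arbitrary: y) (simp_all del: fdiff.simps(2) add: fdiff_Suc' sum_subtractf)

lemma fdiff_shift: "fdiff k (\<lambda>t. g (t + c)) y = fdiff k g (y + c)"
  by (induction k arbitrary: y) (simp_all del: fdiff.simps(2) add: fdiff_Suc' algebra_simps)

lemma newt_step: "newt (Suc N) g (x + 1) = newt (Suc N) g x + newt N (\<lambda>t. g (t + 1) - g t) x"
  unfolding newt_def
  by (simp only: sum.lessThan_Suc_shift ibinom_Suc_Suc zsmult_add_left sum.distrib fdiff.simps ibinom_0)
     (simp add: algebra_simps)

lemma newt_nat: "m < N \<Longrightarrow> newt N g (int m) = g (int m)"
proof (induction m arbitrary: g N)
  case 0
  then obtain N' where N: "N = Suc N'" by (cases N) auto
  have "ibinom 0 (Suc d) = 0" for d using ibinom_nat[of 0 "Suc d"] by simp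
  then show ?case unfolding N newt_def by (simp only: sum.lessThan_Suc_shift) simp
next
  case (Suc m)
  then obtain N' where N: "N = Suc N'" "m < N'" by (cases N) auto
  have "newt N g (int (Suc m)) = newt (Suc N') g (int m + 1)" using N by (simp add: add.commute)
  also have "\<dots> = newt (Suc N') g (int m) + newt N' (\<lambda>t. g (t + 1) - g t) (int m)"
    by (rule newt_step)
  also have "\<dots> = g (int m) + (g (int m + 1) - g (int m))"
    using Suc.IH[of "Suc N'" g] Suc.IH[of N' "\<lambda>t. g (t + 1) - g t"] N by simp
  finally show ?case by (simp add: add.commute)
qed

lemma newt_base: "g (x + int m) = (\<Sum>\<delta><Suc m. zsmult (int (m choose \<delta>)) (fdiff \<delta> g x))"
proof -
  have "g (x + int m) = newt (Suc m) (\<lambda>t. g (t + x)) (int m)"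
    using newt_nat[of m "Suc m" "\<lambda>t. g (t + x)"] by (simp add: add.commute)
  then show ?thesis by (simp add: newt_def fdiff_shift ibinom_nat)
qed

lemma newt_step_fun: "(\<lambda>x. newt (Suc N) g (x + 1) - newt (Suc N) g x) = newt N (\<lambda>t. g (t + 1) - g t)"
proof
  fix x show "newt (Suc N) g (x + 1) - newt (Suc N) g x = newt N (\<lambda>t. g (t + 1) - g t) x"
    using newt_step[of N g x] by (simp add: algebra_simps)
qed

lemma fdiff_newt: "fdiff k (newt (K + k) g) y = newt K (fdiff k g) y"
proof (induction k arbitrary: g)
  case 0 then show ?case by simp
next
  case (Suc k)
  have "fdiff (Suc k) (newt (K + Suc k) g) y = fdiff k (\<lambda>x. newt (Suc (K + k)) g (x + 1) - newt (Suc (K + k)) g x) y"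
    by simp
  also have "\<dots> = fdiff k (newt (K + k) (\<lambda>t. g (t + 1) - g t)) y" by (simp only: newt_step_fun)
  also have "\<dots> = newt K (fdiff (Suc k) g) y" using Suc by simp
  finally show ?case .
qed

locale zsub =
  fixes Z :: "'b::ab_group_add \<Rightarrow> bool"
  assumes Z0: "Z 0" and Zdiff: "Z a \<Longrightarrow> Z b \<Longrightarrow> Z (a - b)"
begin

lemma Zneg: "Z a \<Longrightarrow> Z (- a)" using Zdiff[OF Z0] by simp
lemma Zadd: "Z a \<Longrightarrow> Z b \<Longrightarrow> Z (a + b)" using Zdiff[OF _ Zneg] by fastforce
lemma Znsm: "Z a \<Longrightarrow> Z (nsm m a)" by (induction m) (simp_all add: nsm_Suc Z0 Zadd)
lemma Zzsmult: "Z a \<Longrightarrow> Z (zsmult k a)" by (simp add: zsmult_nsm Znsm Zdiff)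
lemma Zsum: "(\<And>i. i \<in> A \<Longrightarrow> Z (f i)) \<Longrightarrow> Z (\<Sum>i\<in>A. f i)"
  by (induction A rule: infinite_finite_induct) (simp_all add: Z0 Zadd)
lemma Zfdiff: "(\<And>x. Z (g x)) \<Longrightarrow> Z (fdiff k g y)"
  by (induction k arbitrary: y) (simp_all del: fdiff.simps(2) add: fdiff_Suc' Zdiff)

lemma descend:
  assumes "\<And>y. Z (fdiff k D y)" "\<And>y. y \<ge> 0 \<Longrightarrow> Z (D y)"
  shows "Z (D y)"
  using assms
proof (induction k arbitrary: D y)
  case 0 then show ?case by simp
next
  case (Suc k)
  have d: "Z (D (x + 1) - D x)" for x
  proof (rule Suc.IH)
    show "Z (fdiff k (\<lambda>x. D (x + 1) - D x) y)" for y using Suc.prems(1)[of y] by simp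
    show "Z (D (y + 1) - D y)" if "y \<ge> 0" for y using Suc.prems(2) that Zdiff by simp
  qed
  have neg: "Z (D (- int n))" for n
  proof (induction n)
    case 0 then show ?case using Suc.prems by simp
  next
    case (Suc n)
    have "D (- int (Suc n)) = D (- int n) - (D (- int (Suc n) + 1) - D (- int (Suc n)))" by simp
    moreover have "Z (D (- int n) - (D (- int (Suc n) + 1) - D (- int (Suc n))))"
      using Zdiff[OF Suc d] by blast
    ultimately show ?case by simp
  qed
  show ?case
  proof (cases "y \<ge> 0")
    case True then show ?thesis using Suc.prems by blast
  next
    case False
    then have "y = - int (nat (- y))" by simp
    then show ?thesis using neg by metis
  qed
qed

end

context zsub begin

lemma key:
  assumes p: "prime p" and q: "q = p ^ e"
    and per: "\<And>x. Z (g (x + int q) - g x)"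
    and tor: "\<And>c. Z (zsmult (int p ^ \<beta>) c)"
    and k: "k \<ge> \<beta> * q"
  shows "Z (fdiff k g x)"
proof -
  define W where "W j b \<longleftrightarrow> (\<exists>c. Z (b - zsmult (int p ^ j) c))" for j b
  have W_sub: "W j (a - b)" if ha: "W j a" and hb: "W j b" for j a b
  proof -
    obtain ca where h1: "Z (a - zsmult (int p ^ j) ca)" using ha unfolding W_def by blast
    obtain cb where h2: "Z (b - zsmult (int p ^ j) cb)" using hb unfolding W_def by blast
    have e: "(a - b) - zsmult (int p ^ j) (ca - cb) = (a - zsmult (int p ^ j) ca) - (b - zsmult (int p ^ j) cb)"
      by (simp add: zsmult_minus algebra_simps)
    have "Z ((a - b) - zsmult (int p ^ j) (ca - cb))"
      unfolding e by (rule Zdiff[OF h1 h2])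
    then show ?thesis using W_def by blast
  qed
  have W_add: "W j (a + b)" if ha: "W j a" and hb: "W j b" for j a b
  proof -
    obtain ca where h1: "Z (a - zsmult (int p ^ j) ca)" using ha unfolding W_def by blast
    obtain cb where h2: "Z (b - zsmult (int p ^ j) cb)" using hb unfolding W_def by blast
    have e: "(a + b) - zsmult (int p ^ j) (ca + cb) = (a - zsmult (int p ^ j) ca) + (b - zsmult (int p ^ j) cb)"
      by (simp add: zsmult_plus algebra_simps)
    have "Z ((a + b) - zsmult (int p ^ j) (ca + cb))"
      unfolding e by (rule Zadd[OF h1 h2])
    then show ?thesis using W_def by blast
  qed
  have W_Z: "W j b" if "Z b" for j b
    unfolding W_def by (rule exI[where x=0]) (simp add: that)
  have W_sum: "W j (\<Sum>i\<in>A. f i)" if "\<And>i. i \<in> A \<Longrightarrow> W j (f i)" for j A f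
    using that by (induction A rule: infinite_finite_induct) (simp_all add: W_Z Z0 W_add)
  have W_p: "W (Suc j) (zsmult (int p * r) b)" if hw: "W j b" for j r b
  proof -
    obtain c where c: "Z (b - zsmult (int p ^ j) c)" using hw unfolding W_def by blast
    have e: "zsmult (int p * r) b - zsmult (int p ^ Suc j) (zsmult r c)
        = zsmult (int p * r) (b - zsmult (int p ^ j) c)"
      by (simp add: zsmult_minus flip: zsmult_mult) (simp add: algebra_simps)
    show ?thesis unfolding W_def by (rule exI[where x="zsmult r c"]) (subst e, rule Zzsmult[OF c])
  qed
  have W_fin: "Z b" if hw: "W \<beta> b" for b
  proof -
    obtain c where "Z (b - zsmult (int p ^ \<beta>) c)" using hw unfolding W_def by blast
    then have "Z ((b - zsmult (int p ^ \<beta>) c) + zsmult (int p ^ \<beta>) c)" using Zadd[OF _ tor] by blast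
    then show ?thesis by simp
  qed
  have q0: "0 < q" using q p by (simp add: prime_gt_0_nat)
  define h where "h y = (\<Sum>i\<in>{1..<q}. zsmult (int (q choose i)) (fdiff i g y))" for y
  have fq: "fdiff q g y = (g (y + int q) - g y) - h y" for y
  proof -
    have "g (y + int q) = (\<Sum>\<delta><Suc q. zsmult (int (q choose \<delta>)) (fdiff \<delta> g y))"
      by (rule newt_base)
    also have "\<dots> = (\<Sum>\<delta>\<in>{0..<q}. zsmult (int (q choose \<delta>)) (fdiff \<delta> g y)) + fdiff q g y"
      by (simp add: atLeast0LessThan)
    also have "\<dots> = g y + h y + fdiff q g y"
      using q0 by (simp add: sum.atLeast_Suc_lessThan h_def)
    finally show ?thesis by (simp add: algebra_simps)
  qed
  have main: "\<forall>k \<ge> j * q. \<forall>x. W j (fdiff k g x)" for j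
  proof (induction j)
    case 0
    have "W 0 b" for b unfolding W_def by (rule exI[where x=b]) (simp add: Z0)
    then show ?case by blast
  next
    case (Suc j)
    show ?case
    proof (intro allI impI)
      fix k x
      assume kk: "Suc j * q \<le> k"
      define k' where "k' = k - q"
      have k': "k = k' + q" "k' \<ge> j * q" using kk k'_def by auto
      have "fdiff k g x = fdiff k' (fdiff q g) x" unfolding k'(1) fdiff_add by (rule refl)
      also have "\<dots> = fdiff k' (\<lambda>y. (g (y + int q) - g y) - h y) x"
        by (rule arg_cong[where f="\<lambda>F. fdiff k' F x"]) (rule ext, rule fq)
      also have "\<dots> = fdiff k' (\<lambda>y. g (y + int q) - g y) x - fdiff k' h x"
        by (rule fdiff_minus)
      finally have eq: "fdiff k g x = fdiff k' (\<lambda>y. g (y + int q) - g y) x - fdiff k' h x" .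
      have hx: "fdiff k' h x = (\<Sum>i\<in>{1..<q}. zsmult (int (q choose i)) (fdiff (k' + i) g x))"
        unfolding h_def fdiff_sum fdiff_zsmult fdiff_add by simp
      have "W (Suc j) (fdiff k' h x)"
        unfolding hx
      proof (rule W_sum)
        fix i assume i: "i \<in> {1..<q}"
        then have "p dvd (q choose i)" using prime_dvd_choose_pow[OF p] q by auto
        then obtain r where r: "q choose i = p * r" by blast
        have "W j (fdiff (k' + i) g x)" using Suc k' by simp
        then show "W (Suc j) (zsmult (int (q choose i)) (fdiff (k' + i) g x))"
          using W_p[of j _ "int r"] r by simp
      qed
      moreover have "W (Suc j) (fdiff k' (\<lambda>y. g (y + int q) - g y) x)"
        by (rule W_Z, rule Zfdiff, rule per)
      ultimately show "W (Suc j) (fdiff k g x)" unfolding eq by (rule W_sub[rotated])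
    qed
  qed
  then show ?thesis using W_fin k by blast
qed

lemma oneD:
  assumes p: "prime p" and q: "q = p ^ e"
    and per: "\<And>x. Z (g (x + int q) - g x)"
    and tor: "\<And>c. Z (zsmult (int p ^ \<beta>) c)"
  shows "Z (newt (\<beta> * q) g x - g x)"
proof -
  define N where "N = \<beta> * q"
  have extN: "Z (newt (N + d) g y - newt N g y)" for d y
  proof (induction d)
    case 0 then show ?case by (simp add: Z0)
  next
    case (Suc d)
    have e: "newt (N + Suc d) g y - newt N g y
        = (newt (N + d) g y - newt N g y) + zsmult (ibinom y (N + d)) (fdiff (N + d) g 0)"
    proof -
      have "newt (N + Suc d) g y = newt (N + d) g y + zsmult (ibinom y (N + d)) (fdiff (N + d) g 0)"
        unfolding newt_def by simp
      then show ?thesis by (simp add: diff_add_eq)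
    qed
    have "Z (fdiff (N + d) g 0)" using key[where g=g, OF p q per tor] N_def by simp
    then show ?case unfolding e by (rule Zadd[OF Suc Zzsmult])
  qed
  define D where "D y = newt N g y - g y" for y
  have pos: "Z (D y)" if "y \<ge> 0" for y
  proof -
    define m where "m = nat y"
    have m: "y = int m" using that m_def by simp
    have "newt (N + Suc m) g y = g y" using newt_nat[of m "N + Suc m" g] m by simp
    then have "D y = - (newt (N + Suc m) g y - newt N g y)" by (simp add: D_def)
    then show ?thesis using Zneg[OF extN[of "Suc m" y]] by simp
  qed
  have fd: "Z (fdiff N D y)" for y
  proof -
    have "fdiff N D y = fdiff N (newt (0 + N) g) y - fdiff N g y"
      unfolding D_def by (simp add: fdiff_minus)
    also have "\<dots> = - fdiff N g y" by (simp only: fdiff_newt) (simp add: newt_def)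
    finally show ?thesis using key[where g=g, OF p q per tor] N_def Zneg by simp
  qed
  show ?thesis using descend[OF fd pos] D_def N_def by simp
qed

end

lemma zsub_eq0: "zsub (\<lambda>x. x = 0)" by unfold_locales auto

lemma sum_fun_apply': "(\<Sum>i\<in>A. f i) x = (\<Sum>i\<in>A. f i x)"
  by (induction A rule: infinite_finite_induct) simp_all

lemma fdiff_apply: "fdiff k G s x = fdiff k (\<lambda>t. G t x) s"
  by (induction k arbitrary: s) (simp_all del: fdiff.simps(2) add: fdiff_Suc')

lemma nsm_card: "finite A \<Longrightarrow> (\<Sum>y\<in>A. b) = nsm (card A) b"
  by (induction A rule: finite_induct) (simp_all add: nsm_Suc)

lemma torsion_card:
  fixes b :: "'b::{ab_group_add,finite}"
  shows "nsm (card (UNIV :: 'b set)) b = 0"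
proof -
  have "(\<Sum>y\<in>(UNIV::'b set). y) = (\<Sum>y\<in>UNIV. y + b)"
    by (rule sum.reindex_bij_witness[of _ "\<lambda>y. y + b" "\<lambda>y. y - b"]) auto
  also have "\<dots> = (\<Sum>y\<in>UNIV. y) + nsm (card (UNIV :: 'b set)) b"
    by (simp add: sum.distrib nsm_card)
  finally show ?thesis by simp
qed

lemma eval_superset:
  "finite S \<Longrightarrow> {\<delta>. P \<delta> \<noteq> 0} \<subseteq> S \<Longrightarrow>
   polyfract_eval n P x = (\<Sum>\<delta>\<in>S. zsmult (\<Prod>j<n. ibinom (x j) (\<delta> j)) (P \<delta>))"
  unfolding polyfract_eval_def by (rule sum.mono_neutral_left) auto


definition Rper :: "nat \<Rightarrow> (nat \<Rightarrow> nat) \<Rightarrow> ((nat \<Rightarrow> int) \<Rightarrow> 'b) \<Rightarrow> bool" where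
  "Rper n q h \<longleftrightarrow> (\<forall>x j. j < n \<longrightarrow> h (x(j := x j + int (q j))) = h x) \<and> (\<forall>x y. (\<forall>j<n. x j = y j) \<longrightarrow> h x = h y)"

lemma Rper_diff: "Rper n q a \<Longrightarrow> Rper n q b \<Longrightarrow> Rper n q (\<lambda>x. a x - b x :: 'b::ab_group_add)"
  unfolding Rper_def by metis

lemma Rper_fdiff:
  assumes "\<And>t. Rper n q (G t)"
  shows "Rper n q (fdiff k G s :: _ \<Rightarrow> 'b::ab_group_add)"
  using assms
proof (induction k arbitrary: G s)
  case 0 then show ?case by simp
next
  case (Suc k)
  have "fdiff (Suc k) G s = (\<lambda>x. fdiff k G (s + 1) x - fdiff k G s x)"
    by (simp only: fdiff_Suc') (simp add: fun_diff_def)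
  then show ?case using Rper_diff[OF Suc.IH Suc.IH] Suc.prems by metis
qed

lemma multi:
  fixes F :: "(nat \<Rightarrow> int) \<Rightarrow> 'b::ab_group_add"
  assumes p: "prime p" and tor: "\<And>b::'b. zsmult (int p ^ \<beta>) b = 0"
    and qs: "\<forall>j<n. \<exists>e. q j = p ^ e"
    and R: "Rper n q F"
  shows "\<exists>P. is_polyfract n P \<and> (\<forall>x. polyfract_eval n P x = F x)"
  using qs R
proof (induction n arbitrary: F)
  case 0
  define z :: "nat \<Rightarrow> nat" where "z = (\<lambda>_. 0)"
  define P where "P \<delta> = (if \<delta> = z then F (\<lambda>_. 0) else 0)" for \<delta>
  have sup: "{\<delta>. P \<delta> \<noteq> 0} \<subseteq> {z}" by (auto simp: P_def)
  have "is_polyfract 0 P" unfolding is_polyfract_def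
    using sup finite_subset by (auto simp: P_def z_def)
  moreover have "polyfract_eval 0 P x = F x" for x
  proof -
    have "polyfract_eval 0 P x = P z" using eval_superset[OF _ sup] by simp
    also have "\<dots> = F x" using "0.prems"(2) unfolding Rper_def P_def by auto
    finally show ?thesis .
  qed
  ultimately show ?case by blast
next
  case (Suc n)
  obtain e where e: "q n = p ^ e" using Suc.prems(1) by auto
  define g where "g t = (\<lambda>x. F (x(n := t)))" for t
  have perF: "F (x(j := x j + int (q j))) = F x" if "j < Suc n" for x j
    using Suc.prems(2) that unfolding Rper_def by blast
  have locF: "F x = F y" if "\<forall>j<Suc n. x j = y j" for x y
    using Suc.prems(2) that unfolding Rper_def by blast
  have gper: "g (t + int (q n)) - g t = 0" for t
  proof -
    have "g (t + int (q n)) x = g t x" for x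
      using perF[of n "x(n := t)"] by (simp add: g_def)
    then show ?thesis by (simp add: fun_eq_iff fun_diff_def)
  qed
  have gtor: "zsmult (int p ^ \<beta>) h = 0" for h :: "(nat \<Rightarrow> int) \<Rightarrow> 'b"
    by (rule ext) (simp add: zsmult_apply tor)
  define N where "N = \<beta> * q n"
  have newtg: "newt N g t = g t" for t
    using zsub.oneD[OF zsub_eq0, of p "q n" e g \<beta> t] p e gper gtor N_def by simp
  define c where "c \<delta> = fdiff \<delta> g 0" for \<delta>
  have Rg: "Rper n q (g t)" for t
    unfolding Rper_def
  proof (intro conjI allI impI)
    fix x j assume j: "j < n"
    have "(x(j := x j + int (q j)))(n := t) = (x(n := t))(j := (x(n := t)) j + int (q j))"
      using j by (auto simp: fun_eq_iff)
    then show "g t (x(j := x j + int (q j))) = g t x"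
      using perF[of j "x(n := t)"] j by (simp add: g_def)
  next
    fix x y :: "nat \<Rightarrow> int" assume "\<forall>j<n. x j = y j"
    then show "g t x = g t y" unfolding g_def by (intro locF) auto
  qed
  have Rc: "Rper n q (c \<delta>)" for \<delta>
    unfolding c_def by (rule Rper_fdiff, rule Rg)
  have "\<forall>\<delta>. \<exists>P. is_polyfract n P \<and> (\<forall>x. polyfract_eval n P x = c \<delta> x)"
    using Suc.IH Suc.prems(1) Rc by simp
  then obtain Pf where Pf: "\<And>\<delta>. is_polyfract n (Pf \<delta>)" "\<And>\<delta> x. polyfract_eval n (Pf \<delta>) x = c \<delta> x"
    by metis
  define A where "A k = {e. Pf k e \<noteq> 0}" for k
  have finA: "finite (A k)" for k using Pf(1) unfolding is_polyfract_def A_def by blast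
  have zA: "e j = 0" if "e \<in> A k" "j \<ge> n" for e k j
    using Pf(1)[of k] that unfolding is_polyfract_def A_def by blast
  define P' where "P' d = (if d n < N then Pf (d n) (d(n := 0)) else 0)" for d
  define U where "U = (\<Union>k\<in>{..<N}. (\<lambda>e. e(n := k)) ` A k)"
  have finU: "finite U" unfolding U_def using finA by blast
  have supU: "{d. P' d \<noteq> 0} \<subseteq> U"
  proof
    fix d assume "d \<in> {d. P' d \<noteq> 0}"
    then have d: "d n < N" "Pf (d n) (d(n := 0)) \<noteq> 0" by (auto simp: P'_def split: if_splits)
    then have "d(n := 0) \<in> A (d n)" by (simp add: A_def)
    moreover have "d = (d(n := 0))(n := d n)" by simp
    ultimately show "d \<in> U" unfolding U_def using d(1) by blast
  qed
  have "is_polyfract (Suc n) P'"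
    unfolding is_polyfract_def
  proof (intro conjI allI impI)
    show "finite {\<delta>. P' \<delta> \<noteq> 0}" using finU supU finite_subset by blast
  next
    fix d j assume d: "P' d \<noteq> 0" and j: "Suc n \<le> j"
    then have "d(n := 0) \<in> A (d n)" by (auto simp: P'_def A_def split: if_splits)
    then have "(d(n := 0)) j = 0" using zA[of "d(n := 0)" "d n" j] j by simp
    then show "d j = 0" using j by simp
  qed
  moreover have "polyfract_eval (Suc n) P' x = F x" for x
  proof -
    define T where "T d = zsmult (\<Prod>j<Suc n. ibinom (x j) (d j)) (P' d)" for d
    have "polyfract_eval (Suc n) P' x = (\<Sum>d\<in>U. T d)"
      unfolding T_def by (rule eval_superset[OF finU supU])
    also have "\<dots> = (\<Sum>k\<in>{..<N}. (\<Sum>d\<in>(\<lambda>e. e(n := k)) ` A k. T d))"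
      unfolding U_def
    proof (rule sum.UNION_disjoint)
      show "\<forall>i\<in>{..<N}. \<forall>j\<in>{..<N}. i \<noteq> j \<longrightarrow> (\<lambda>e. e(n := i)) ` A i \<inter> (\<lambda>e. e(n := j)) ` A j = {}"
        by (auto simp: fun_eq_iff) (metis fun_upd_same)
    qed (use finA in auto)
    also have "\<dots> = (\<Sum>k\<in>{..<N}. (\<Sum>e\<in>A k. T (e(n := k))))"
    proof (rule sum.cong[OF refl])
      fix k
      have "inj_on (\<lambda>e. e(n := k)) (A k)"
      proof (rule inj_onI)
        fix e1 e2 assume "e1 \<in> A k" "e2 \<in> A k" "e1(n := k) = e2(n := k)"
        moreover have "e1 n = 0" "e2 n = 0" using zA calculation by auto
        ultimately show "e1 = e2" by (metis fun_upd_triv fun_upd_upd)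
      qed
      then show "(\<Sum>d\<in>(\<lambda>e. e(n := k)) ` A k. T d) = (\<Sum>e\<in>A k. T (e(n := k)))"
        by (rule sum.reindex[unfolded comp_def])
    qed
    also have "\<dots> = (\<Sum>k\<in>{..<N}. zsmult (ibinom (x n) k) (c k x))"
    proof (rule sum.cong[OF refl])
      fix k assume k: "k \<in> {..<N}"
      have "T (e(n := k)) = zsmult (ibinom (x n) k) (zsmult (\<Prod>j<n. ibinom (x j) (e j)) (Pf k e))"
        if e: "e \<in> A k" for e
      proof -
        have en: "e n = 0" using zA e by auto
        have "P' (e(n := k)) = Pf k e" using k en by (simp add: P'_def fun_upd_idem)
        moreover have "(\<Prod>j<Suc n. ibinom (x j) ((e(n := k)) j)) = ibinom (x n) k * (\<Prod>j<n. ibinom (x j) (e j))"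
          by (simp add: mult.commute)
        ultimately show ?thesis unfolding T_def by (simp add: zsmult_mult) (rule zsmult_swap)
      qed
      then have "(\<Sum>e\<in>A k. T (e(n := k))) = zsmult (ibinom (x n) k) (\<Sum>e\<in>A k. zsmult (\<Prod>j<n. ibinom (x j) (e j)) (Pf k e))"
        by (simp add: zsmult_sum)
      also have "\<dots> = zsmult (ibinom (x n) k) (polyfract_eval n (Pf k) x)"
        by (simp add: polyfract_eval_def A_def)
      finally show "(\<Sum>e\<in>A k. T (e(n := k))) = zsmult (ibinom (x n) k) (c k x)" by (simp add: Pf(2))
    qed
    also have "\<dots> = newt N g (x n) x"
      by (simp add: newt_def sum_fun_apply' zsmult_apply c_def)
    also have "\<dots> = F x" by (simp add: newtg g_def)
    finally show ?thesis .
  qed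
  ultimately show ?case by blast
qed


theorem corollary3p7:
  fixes p :: nat
  assumes "prime p"
  shows "(\<forall>(\<alpha>::nat) (\<beta>::nat) (f::int \<Rightarrow> int). \<alpha> \<ge> 1 \<longrightarrow> \<beta> \<ge> 1 \<longrightarrow>
            (\<forall>x. f (x + int p ^ \<alpha>) mod int p ^ \<beta> = f x mod int p ^ \<beta>) \<longrightarrow>
            (\<exists>(c::nat \<Rightarrow> int) N. \<forall>x.
                (\<Sum>\<delta><N. c \<delta> * ibinom x \<delta>) mod int p ^ \<beta> = f x mod int p ^ \<beta>))
       \<and> (\<forall>(n::nat) (q::nat \<Rightarrow> nat) (f::(nat \<Rightarrow> int) \<Rightarrow> 'b::{ab_group_add,finite}).
            (\<exists>k. card (UNIV :: 'b set) = p ^ k) \<longrightarrow>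
            (\<forall>j<n. q j \<ge> p \<and> (\<exists>e. q j = p ^ e)) \<longrightarrow>
            (\<exists>P :: (nat \<Rightarrow> nat) \<Rightarrow> 'b. is_polyfract n P
               \<and> (\<forall>x j. j < n \<longrightarrow> polyfract_eval n P (x(j := x j + int (q j))) = polyfract_eval n P x)
               \<and> (\<forall>x. (\<forall>j<n. 0 \<le> x j \<and> x j < int (q j)) \<and> (\<forall>j\<ge>n. x j = 0)
                      \<longrightarrow> polyfract_eval n P x = f x)))"
proof (intro conjI allI impI)
  fix \<alpha> \<beta> :: nat and f :: "int \<Rightarrow> int"
  assume per: "\<forall>x. f (x + int p ^ \<alpha>) mod int p ^ \<beta> = f x mod int p ^ \<beta>"
  have zs: "zsub (\<lambda>x::int. int p ^ \<beta> dvd x)"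
    by unfold_locales auto
  have per': "int p ^ \<beta> dvd (f (x + int (p ^ \<alpha>)) - f x)" for x
    using per by (simp add: mod_eq_dvd_iff)
  have tor: "int p ^ \<beta> dvd zsmult (int p ^ \<beta>) c" for c
    by (simp add: zsmult_int)
  have "int p ^ \<beta> dvd (newt (\<beta> * p ^ \<alpha>) f x - f x)" for x
    using zsub.oneD[OF zs assms, of "p ^ \<alpha>" \<alpha> f \<beta> x] per' tor by simp
  then have h: "(\<Sum>\<delta><\<beta> * p ^ \<alpha>. fdiff \<delta> f 0 * ibinom x \<delta>) mod int p ^ \<beta> = f x mod int p ^ \<beta>" for x
    by (simp add: newt_def zsmult_int mod_eq_dvd_iff mult.commute)
  show "\<exists>(c::nat \<Rightarrow> int) N. \<forall>x.
                (\<Sum>\<delta><N. c \<delta> * ibinom x \<delta>) mod int p ^ \<beta> = f x mod int p ^ \<beta>"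
    by (rule exI[of _ "\<lambda>\<delta>. fdiff \<delta> f 0"], rule exI[of _ "\<beta> * p ^ \<alpha>"], rule allI, rule h)
next
  fix n :: nat and q :: "nat \<Rightarrow> nat" and f :: "(nat \<Rightarrow> int) \<Rightarrow> 'b::{ab_group_add,finite}"
  assume card: "\<exists>k. card (UNIV :: 'b set) = p ^ k"
    and qs: "\<forall>j<n. q j \<ge> p \<and> (\<exists>e. q j = p ^ e)"
  obtain k where k: "card (UNIV :: 'b set) = p ^ k" using card by blast
  have tor: "zsmult (int p ^ k) b = 0" for b :: 'b
  proof -
    have "nat (int p ^ k) = p ^ k" by (metis nat_int of_nat_power)
    moreover have "nat (- (int p ^ k)) = 0" by simp
    ultimately show ?thesis using torsion_card[of b] k by (simp add: zsmult_nsm)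
  qed
  define F where "F x = f (\<lambda>j. if j < n then x j mod int (q j) else 0)" for x
  have R: "Rper n q F"
    unfolding Rper_def
  proof (intro conjI allI impI)
    fix x j assume j: "j < n"
    have "(\<lambda>i. if i < n then (x(j := x j + int (q j))) i mod int (q i) else 0)
        = (\<lambda>i. if i < n then x i mod int (q i) else 0)"
      by (auto simp: fun_eq_iff)
    then show "F (x(j := x j + int (q j))) = F x" unfolding F_def by simp
  next
    fix x y :: "nat \<Rightarrow> int" assume "\<forall>j<n. x j = y j"
    then show "F x = F y" unfolding F_def by (metis)
  qed
  have qs': "\<forall>j<n. \<exists>e. q j = p ^ e" using qs by blast
  obtain P where P: "is_polyfract n P" "\<And>x. polyfract_eval n P x = F x"
    using multi[OF assms tor qs' R] by blast
  have qpos: "0 < q j" if "j < n" for j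
    using qs that prime_gt_0_nat[OF assms] by fastforce
  show "\<exists>P :: (nat \<Rightarrow> nat) \<Rightarrow> 'b. is_polyfract n P
               \<and> (\<forall>x j. j < n \<longrightarrow> polyfract_eval n P (x(j := x j + int (q j))) = polyfract_eval n P x)
               \<and> (\<forall>x. (\<forall>j<n. 0 \<le> x j \<and> x j < int (q j)) \<and> (\<forall>j\<ge>n. x j = 0)
                      \<longrightarrow> polyfract_eval n P x = f x)"
  proof (intro exI conjI allI impI)
    show "is_polyfract n P" by (rule P(1))
  next
    fix x j assume "j < n"
    then show "polyfract_eval n P (x(j := x j + int (q j))) = polyfract_eval n P x"
      using R unfolding P(2) Rper_def by blast
  next
    fix x assume x: "(\<forall>j<n. 0 \<le> x j \<and> x j < int (q j)) \<and> (\<forall>j\<ge>n. x j = 0)"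
    have "(\<lambda>j. if j < n then x j mod int (q j) else 0) = x"
    proof
      fix j show "(if j < n then x j mod int (q j) else 0) = x j"
        using x by (cases "j < n") auto
    qed
    then show "polyfract_eval n P x = f x" unfolding P(2) F_def by simp
  qed
qed

end
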